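(* Let $\tau$ be a uniformly random permutation of $\{1,\dots,n\}$ and let $S_n$ be the number of steps of the greedy walk from $1$ to $n$ in $G_n$ (as in the context), and $L_n=L_n(\tau)$, $R_n=R_n(\tau)$. Then \[ \mathbb{E}[S_n]=2H_n-2 = 2\log n+2\gamma-2+o(1), \] and \[ \operatorname{Var}(S_n)=2\Bigl(H_n-\sum_{i=1}^n\frac1{i^2}\Bigr)+2\operatorname{Cov}(L_n,R_n)=2\log n+O(1), \] where $H_n=\sum_{i=1}^n 1/i$, $\gamma$ is Euler's constant and $\log$ is the natural logarithm.
   Context: Vertices $V=\{1,\dots,n\}\subset\mathbb{Z}$. A permutation $\tau$ of $V$ gives insertion times: vertex $x$ is inserted at time $\tau(x)$. The undirected graph $G_n$ on $V$ is built as follows: start with no edges; for $t=1,\dots,n$, let $x$ be the vertex with $\tau(x)=t$; if some $y<x$ with $\tau(y)<t$ exists, add an edge between $x$ and the largest such $y$; if some $y>x$ with $\tau(y)<t$ exists, add an edge between $x$ and the smallest such $y$. The greedy walk toward target $n$ starts at $x_0=1$ and, from the current vertex $x\ne n$, moves to the neighbor $y$ of $x$ minimizing $|y-n|$, stopping at $n$; $S_n$ is its number of moves. For a permutation $\sigma$ of $\{1,\dots,n\}$, position $i$ is a left-to-right minimum if $\sigma(i)<\min\{\sigma(1),\dots,\sigma(i-1)\}$ ($i=1$ always is), and a right-to-left minimum if $\sigma(i)<\min\{\sigma(i+1),\dots,\sigma(n)\}$ ($i=n$ always is); $L_n(\sigma)$, $R_n(\sigma)$ count them. *)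

theory Defs
  imports "HOL-Analysis.Analysis" "HOL-Combinatorics.Permutations" "HOL-Library.Landau_Symbols"
begin

text \<open>Vertices are 1..n (as naturals); tau x is the insertion time of vertex x.\<close>

definition perms :: "nat \<Rightarrow> (nat \<Rightarrow> nat) set" where
  "perms n = {\<tau>. \<tau> permutes {1..n}}"

definition inserted_edge :: "nat \<Rightarrow> (nat \<Rightarrow> nat) \<Rightarrow> nat \<Rightarrow> nat \<Rightarrow> bool" where
  "inserted_edge n \<tau> x y \<longleftrightarrow> x \<in> {1..n} \<and> y \<in> {1..n} \<and> \<tau> y < \<tau> x \<and>
     ((y < x \<and> (\<forall>z. y < z \<and> z < x \<longrightarrow> \<not> \<tau> z < \<tau> x)) \<or>
      (x < y \<and> (\<forall>z. x < z \<and> z < y \<longrightarrow> \<not> \<tau> z < \<tau> x)))"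

definition adj :: "nat \<Rightarrow> (nat \<Rightarrow> nat) \<Rightarrow> nat \<Rightarrow> nat \<Rightarrow> bool" where
  "adj n \<tau> x y \<longleftrightarrow> inserted_edge n \<tau> x y \<or> inserted_edge n \<tau> y x"

definition greedy_step :: "nat \<Rightarrow> (nat \<Rightarrow> nat) \<Rightarrow> nat \<Rightarrow> nat" where
  "greedy_step n \<tau> x = (ARG_MIN (\<lambda>y. \<bar>int y - int n\<bar>) y. adj n \<tau> x y)"

definition greedy_steps :: "nat \<Rightarrow> (nat \<Rightarrow> nat) \<Rightarrow> nat" where
  "greedy_steps n \<tau> = (LEAST k. (greedy_step n \<tau> ^^ k) 1 = n)"

definition ltr_minima :: "nat \<Rightarrow> (nat \<Rightarrow> nat) \<Rightarrow> nat" where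
  "ltr_minima n \<sigma> = card {i \<in> {1..n}. \<forall>j \<in> {1..<i}. \<sigma> i < \<sigma> j}"

definition rtl_minima :: "nat \<Rightarrow> (nat \<Rightarrow> nat) \<Rightarrow> nat" where
  "rtl_minima n \<sigma> = card {i \<in> {1..n}. \<forall>j \<in> {i<..n}. \<sigma> i < \<sigma> j}"

definition E_perm :: "nat \<Rightarrow> ((nat \<Rightarrow> nat) \<Rightarrow> real) \<Rightarrow> real" where
  "E_perm n f = (\<Sum>\<tau>\<in>perms n. f \<tau>) / real (card (perms n))"

definition Var_perm :: "nat \<Rightarrow> ((nat \<Rightarrow> nat) \<Rightarrow> real) \<Rightarrow> real" where
  "Var_perm n f = E_perm n (\<lambda>\<tau>. (f \<tau> - E_perm n f)\<^sup>2)"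

definition Cov_perm :: "nat \<Rightarrow> ((nat \<Rightarrow> nat) \<Rightarrow> real) \<Rightarrow> ((nat \<Rightarrow> nat) \<Rightarrow> real) \<Rightarrow> real" where
  "Cov_perm n f g = E_perm n (\<lambda>\<tau>. (f \<tau> - E_perm n f) * (g \<tau> - E_perm n g))"

end

theory Submission
  imports Defs
begin
definition LT :: "nat \<Rightarrow> (nat \<Rightarrow> nat) \<Rightarrow> nat set" where
  "LT n \<tau> = {i \<in> {1..n}. \<forall>j \<in> {1..<i}. \<tau> i < \<tau> j}"

definition RT :: "nat \<Rightarrow> (nat \<Rightarrow> nat) \<Rightarrow> nat set" where
  "RT n \<tau> = {i \<in> {1..n}. \<forall>j \<in> {i<..n}. \<tau> i < \<tau> j}"

lemma not_adj_block:
  assumes "x < w" "w < y" "\<tau> w < \<tau> x \<or> \<tau> w < \<tau> y"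
  shows "\<not> adj n \<tau> x y"
  using assms unfolding adj_def inserted_edge_def by force

lemma adj_range: "adj n \<tau> x y \<Longrightarrow> y \<in> {1..n}"
  unfolding adj_def inserted_edge_def by auto

lemma greedy_step_eq:
  assumes a: "adj n \<tau> x y0" and m: "\<forall>y. adj n \<tau> x y \<longrightarrow> y \<le> y0"
  shows "greedy_step n \<tau> x = y0"
proof -
  let ?f = "\<lambda>y::nat. \<bar>int y - int n\<bar>"
  have y0n: "y0 \<le> n" using adj_range[OF a] by auto
  have ex: "is_arg_min ?f (adj n \<tau> x) y0"
    unfolding is_arg_min_def using a m adj_range y0n by fastforce
  have "is_arg_min ?f (adj n \<tau> x) (greedy_step n \<tau> x)"
    unfolding greedy_step_def arg_min_def using ex by (rule someI)
  then have g: "adj n \<tau> x (greedy_step n \<tau> x)" "\<not> ?f y0 < ?f (greedy_step n \<tau> x)"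
    using a unfolding is_arg_min_def by blast+
  have "greedy_step n \<tau> x \<le> n" using adj_range[OF g(1)] by auto
  moreover have "greedy_step n \<tau> x \<le> y0" using m g(1) by auto
  ultimately show ?thesis using g(2) y0n by linarith
qed

lemma step_next:
  assumes perm: "\<tau> permutes {1..n}"
    and mn: "m \<in> {1..n}" and mmin: "\<forall>j\<in>{1..n}. \<tau> m \<le> \<tau> j"
    and xV: "x \<in> LT n \<tau> \<union> RT n \<tau>" and xn: "x < n"
  shows "\<exists>y0 \<in> LT n \<tau> \<union> RT n \<tau>. x < y0 \<and> (\<forall>z. x < z \<and> z < y0 \<longrightarrow> z \<notin> LT n \<tau> \<union> RT n \<tau>)
           \<and> greedy_step n \<tau> x = y0"
proof -
  have inj: "inj \<tau>" using perm by (rule permutes_inj)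
  have ne: "\<And>a b. a \<noteq> b \<Longrightarrow> \<tau> a \<noteq> \<tau> b" using inj by (meson injD)
  have mlt: "\<And>j. j \<in> {1..n} \<Longrightarrow> j \<noteq> m \<Longrightarrow> \<tau> m < \<tau> j"
  proof -
    fix j assume "j \<in> {1..n}" "j \<noteq> m"
    then have "\<tau> m \<le> \<tau> j" "\<tau> m \<noteq> \<tau> j" using mmin ne by auto
    then show "\<tau> m < \<tau> j" by simp
  qed
  have x1n: "x \<in> {1..n}" using xV unfolding LT_def RT_def by auto
  show ?thesis
  proof (cases "x < m")
    case True
    have xL: "x \<in> LT n \<tau>"
    proof (rule ccontr)
      assume "x \<notin> LT n \<tau>"
      then have "x \<in> RT n \<tau>" using xV by auto
      then have "\<tau> x < \<tau> m" unfolding RT_def using True mn by auto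
      moreover have "\<tau> m < \<tau> x" using mlt x1n True by auto
      ultimately show False by simp
    qed
    have "\<tau> m < \<tau> x" using mlt x1n True by auto
    then obtain r where r: "x < r \<and> \<tau> r < \<tau> x" and rl: "\<forall>y. x < y \<and> \<tau> y < \<tau> x \<longrightarrow> r \<le> y"
      using ex_has_least_nat[where P="\<lambda>y. x < y \<and> \<tau> y < \<tau> x" and k=m and m="\<lambda>y. y"] True
      by auto
    have rm: "r \<le> m" using rl True \<open>\<tau> m < \<tau> x\<close> by auto
    have r1n: "r \<in> {1..n}" using rm mn r by auto
    have btw: "\<And>z. x < z \<Longrightarrow> z < r \<Longrightarrow> \<tau> x < \<tau> z"
    proof -
      fix z assume "x < z" "z < r"
      then have "\<not> \<tau> z < \<tau> x" using rl by (meson leD)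
      moreover have "\<tau> z \<noteq> \<tau> x" using ne \<open>x < z\<close> by auto
      ultimately show "\<tau> x < \<tau> z" by simp
    qed
    have rL: "r \<in> LT n \<tau>"
      unfolding LT_def
    proof (intro CollectI conjI ballI)
      show "r \<in> {1..n}" by (rule r1n)
      fix j assume j: "j \<in> {1..<r}"
      show "\<tau> r < \<tau> j"
      proof (cases "j < x")
        case True
        then have "\<tau> x < \<tau> j" using xL j unfolding LT_def by auto
        then show ?thesis using r by simp
      next
        case False
        then have "j = x \<or> x < j" by auto
        then show ?thesis using btw j r by fastforce
      qed
    qed
    have nb: "\<forall>z. x < z \<and> z < r \<longrightarrow> z \<notin> LT n \<tau> \<union> RT n \<tau>"
    proof (intro allI impI)
      fix z assume z: "x < z \<and> z < r"
      have "\<tau> x < \<tau> z" using btw z by auto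
      have "z \<notin> LT n \<tau>"
      proof
        assume "z \<in> LT n \<tau>"
        then have "\<tau> z < \<tau> x" unfolding LT_def using z x1n by auto
        then show False using \<open>\<tau> x < \<tau> z\<close> by simp
      qed
      moreover have "z \<notin> RT n \<tau>"
      proof
        assume "z \<in> RT n \<tau>"
        then have "\<tau> z < \<tau> r" unfolding RT_def using z r1n by auto
        then show False using \<open>\<tau> x < \<tau> z\<close> r by simp
      qed
      ultimately show "z \<notin> LT n \<tau> \<union> RT n \<tau>" by simp
    qed
    have adj: "adj n \<tau> x r"
      unfolding adj_def inserted_edge_def using x1n r1n r rl
      by (metis leD)
    have mx: "\<forall>y. adj n \<tau> x y \<longrightarrow> y \<le> r"
      using not_adj_block[of x r _ \<tau> n] r by (meson not_le)
    show ?thesis using rL r nb greedy_step_eq[OF adj mx] by blast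
  next
    case False
    have xR: "x \<in> RT n \<tau>"
    proof (cases "x = m")
      case True
      show ?thesis unfolding RT_def using True mn mlt by auto
    next
      case False2: False
      show ?thesis
      proof (rule ccontr)
        assume "x \<notin> RT n \<tau>"
        then have "x \<in> LT n \<tau>" using xV by auto
        then have "\<tau> x < \<tau> m" unfolding LT_def using False False2 mn by auto
        moreover have "\<tau> m < \<tau> x" using mlt x1n False2 by auto
        ultimately show False by simp
      qed
    qed
    obtain s where s: "x < s \<and> s \<le> n" and sl: "\<forall>y. x < y \<and> y \<le> n \<longrightarrow> \<tau> s \<le> \<tau> y"
      using ex_has_least_nat[where P="\<lambda>y. x < y \<and> y \<le> n" and k=n and m=\<tau>] xn by auto
    have s1n: "s \<in> {1..n}" using s x1n by auto
    have sR: "s \<in> RT n \<tau>"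
      unfolding RT_def using s1n sl ne s
      by (auto intro: le_neq_implies_less)
    have btw: "\<And>z. x < z \<Longrightarrow> z < s \<Longrightarrow> \<tau> s < \<tau> z"
      using sl ne s by (metis le_neq_implies_less less_imp_le_nat order.strict_trans2 nat_neq_iff)
    have nb: "\<forall>z. x < z \<and> z < s \<longrightarrow> z \<notin> LT n \<tau> \<union> RT n \<tau>"
    proof (intro allI impI)
      fix z assume z: "x < z \<and> z < s"
      have "z \<notin> RT n \<tau>"
      proof
        assume "z \<in> RT n \<tau>"
        then have "\<tau> z < \<tau> s" unfolding RT_def using z s by auto
        then show False using btw z by (meson less_asym)
      qed
      moreover have "z \<notin> LT n \<tau>"
      proof
        assume zl: "z \<in> LT n \<tau>"
        have "m \<in> {1..<z}" using z False mn by auto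
        then have "\<tau> z < \<tau> m" using zl unfolding LT_def by auto
        moreover have "\<tau> m < \<tau> z" using mlt z False s x1n by auto
        ultimately show False by simp
      qed
      ultimately show "z \<notin> LT n \<tau> \<union> RT n \<tau>" by simp
    qed
    have txs: "\<tau> x < \<tau> s" using xR s unfolding RT_def by auto
    have adj: "adj n \<tau> x s"
      unfolding adj_def inserted_edge_def using x1n s1n s txs btw
      by (meson leD less_imp_le_nat order.strict_trans1 not_le)
    have mx: "\<forall>y. adj n \<tau> x y \<longrightarrow> y \<le> s"
    proof (intro allI impI)
      fix y assume a: "adj n \<tau> x y"
      show "y \<le> s"
      proof (rule ccontr)
        assume "\<not> y \<le> s"
        then have "s < y" by simp
        moreover have "y \<le> n" using adj_range[OF a] by auto
        ultimately have "\<tau> s < \<tau> y" using sl ne s by (metis le_neq_implies_less nat_neq_iff order.strict_trans)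
        then show False using not_adj_block[of x s y \<tau> n] s \<open>s < y\<close> a by auto
      qed
    qed
    show ?thesis using sR s nb greedy_step_eq[OF adj mx] by blast
  qed
qed

lemma walk:
  assumes perm: "\<tau> permutes {1..n}" and n1: "1 \<le> n"
  shows "greedy_steps n \<tau> = card (LT n \<tau>) + card (RT n \<tau>) - 2"
proof -
  obtain m where mn: "m \<in> {1..n}" and mmin: "\<forall>j\<in>{1..n}. \<tau> m \<le> \<tau> j"
    using ex_has_least_nat[where P="\<lambda>j. j \<in> {1..n}" and k=1 and m=\<tau>] n1 by auto
  have inj: "inj \<tau>" using perm by (rule permutes_inj)
  have ne: "\<And>a b. a \<noteq> b \<Longrightarrow> \<tau> a \<noteq> \<tau> b" using inj by (meson injD)
  have mlt: "\<And>j. j \<in> {1..n} \<Longrightarrow> j \<noteq> m \<Longrightarrow> \<tau> m < \<tau> j"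
  proof -
    fix j assume "j \<in> {1..n}" "j \<noteq> m"
    then have "\<tau> m \<le> \<tau> j" "\<tau> m \<noteq> \<tau> j" using mmin ne by auto
    then show "\<tau> m < \<tau> j" by simp
  qed
  define V where "V = LT n \<tau> \<union> RT n \<tau>"
  have Vsub: "V \<subseteq> {1..n}" unfolding V_def LT_def RT_def by auto
  have finV: "finite V" using Vsub finite_subset by blast
  have finL: "finite (LT n \<tau>)" unfolding LT_def by auto
  have finR: "finite (RT n \<tau>)" unfolding RT_def by auto
  have oneV: "1 \<in> V" unfolding V_def LT_def using n1 by auto
  have nV: "n \<in> V" unfolding V_def RT_def using n1 by auto
  have mL: "m \<in> LT n \<tau>" unfolding LT_def using mn mlt by auto
  have mR: "m \<in> RT n \<tau>" unfolding RT_def using mn mlt by auto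
  have int: "LT n \<tau> \<inter> RT n \<tau> = {m}"
  proof (rule set_eqI, rule iffI)
    fix i assume i: "i \<in> LT n \<tau> \<inter> RT n \<tau>"
    show "i \<in> {m}"
    proof (rule ccontr)
      assume "i \<notin> {m}"
      then have im: "i \<noteq> m" by simp
      have i1n: "i \<in> {1..n}" using i unfolding LT_def by auto
      have "\<tau> m < \<tau> i" using mlt i1n im by auto
      moreover have "\<tau> i < \<tau> m"
      proof (cases "i < m")
        case True
        then show ?thesis using i mn unfolding RT_def by auto
      next
        case False
        then show ?thesis using i mn im unfolding LT_def by auto
      qed
      ultimately show False by simp
    qed
  next
    fix i assume "i \<in> {m}" then show "i \<in> LT n \<tau> \<inter> RT n \<tau>" using mL mR by auto
  qed
  have cardV: "card V + 1 = card (LT n \<tau>) + card (RT n \<tau>)"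
    using card_Un_Int[OF finL finR] int unfolding V_def by simp
  have cV1: "card V \<ge> 1" using finV nV card_0_eq by fastforce
  define c where "c x = card {y\<in>V. y < x}" for x
  have cn: "c n = card V - 1"
  proof -
    have "{y\<in>V. y < n} = V - {n}" using Vsub by auto
    then show ?thesis unfolding c_def using finV nV by simp
  qed
  have clt: "c x < c n" if "x \<in> V" "x < n" for x
  proof -
    have "{y\<in>V. y < x} \<subset> {y\<in>V. y < n}" using that by auto
    then show ?thesis unfolding c_def by (intro psubset_card_mono) (use finV in auto)
  qed
  let ?g = "greedy_step n \<tau>"
  have inv: "k \<le> card V - 1 \<Longrightarrow> (?g ^^ k) 1 \<in> V \<and> c ((?g ^^ k) 1) = k" for k
  proof (induction k)
    case 0
    have "{y\<in>V. y < 1} = {}" using Vsub by auto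
    then show ?case using oneV unfolding c_def by simp
  next
    case (Suc k)
    define x where "x = (?g ^^ k) 1"
    have xV: "x \<in> V" and cx: "c x = k" using Suc x_def by auto
    have "x \<noteq> n" using cx cn Suc by auto
    then have xn: "x < n" using xV Vsub by fastforce
    obtain y0 where y0: "y0 \<in> V" "x < y0" "\<forall>z. x < z \<and> z < y0 \<longrightarrow> z \<notin> V" "?g x = y0"
      using step_next[OF perm mn mmin, of x] xV xn unfolding V_def by blast
    have "{y\<in>V. y < y0} = insert x {y\<in>V. y < x}"
      using y0 xV by (auto simp: not_less_iff_gr_or_eq)
    then have "c y0 = Suc (c x)" unfolding c_def using finV by simp
    then show ?case using y0 cx x_def by simp
  qed
  have P: "(?g ^^ (card V - 1)) 1 = n"
  proof (rule ccontr)
    define x where "x = (?g ^^ (card V - 1)) 1"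
    assume "(?g ^^ (card V - 1)) 1 \<noteq> n"
    then have "x \<noteq> n" unfolding x_def .
    moreover have xV: "x \<in> V" "c x = card V - 1" using inv x_def by auto
    ultimately have "x < n" using Vsub by fastforce
    then have "c x < c n" using clt[of x] xV(1) by blast
    then show False using xV cn by simp
  qed
  have "greedy_steps n \<tau> = card V - 1"
    unfolding greedy_steps_def
  proof (rule Least_equality)
    show "(?g ^^ (card V - 1)) 1 = n" by (rule P)
    fix k assume k: "(?g ^^ k) 1 = n"
    show "card V - 1 \<le> k"
    proof (rule ccontr)
      assume "\<not> card V - 1 \<le> k"
      then have "k \<le> card V - 1" "k < card V - 1" by auto
      then have "c n = k" using inv k by metis
      then show False using cn \<open>k < card V - 1\<close> by simp
    qed
  qed
  then show ?thesis using cardV by simp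
qed

lemma perms_finite: "finite (perms n)"
  unfolding perms_def by (rule finite_permutations) simp

lemma card_perms: "card (perms n) = fact n"
  unfolding perms_def by (rule card_permutations) auto

lemma perms_swap: "\<tau> \<in> perms n \<Longrightarrow> a \<in> {1..n} \<Longrightarrow> b \<in> {1..n} \<Longrightarrow> \<tau> \<circ> Transposition.transpose a b \<in> perms n"
  unfolding perms_def by (auto intro!: permutes_compose permutes_swap_id)

lemma count_min:
  assumes EP: "E \<subseteq> perms n" and PS: "P \<subseteq> {1..n}" and pP: "p \<in> P"
    and cl: "\<And>\<tau> a b. \<tau> \<in> E \<Longrightarrow> a \<in> P \<Longrightarrow> b \<in> P \<Longrightarrow> \<tau> \<circ> Transposition.transpose a b \<in> E"
  shows "card {\<tau>\<in>E. \<forall>q\<in>P-{p}. \<tau> p < \<tau> q} * card P = card E"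
proof -
  define F where "F q = {\<tau>\<in>E. \<forall>q'\<in>P-{q}. \<tau> q < \<tau> q'}" for q
  have finP: "finite P" using PS finite_subset by blast
  have finE: "finite E" using EP perms_finite finite_subset by blast
  have disj: "\<forall>q\<in>P. \<forall>q'\<in>P. q \<noteq> q' \<longrightarrow> F q \<inter> F q' = {}"
  proof (intro ballI impI)
    fix q q' assume q: "q \<in> P" "q' \<in> P" "q \<noteq> q'"
    show "F q \<inter> F q' = {}"
    proof (rule ccontr)
      assume "F q \<inter> F q' \<noteq> {}"
      then obtain \<tau> where t: "\<tau> \<in> F q" "\<tau> \<in> F q'" by blast
      have "\<tau> q < \<tau> q'" using t(1) q unfolding F_def by auto
      moreover have "\<tau> q' < \<tau> q" using t(2) q unfolding F_def by auto
      ultimately show False by simp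
    qed
  qed
  have cover: "E = (\<Union>q\<in>P. F q)"
  proof (rule set_eqI, rule iffI)
    fix \<tau> assume t: "\<tau> \<in> E"
    then have "inj \<tau>" using EP unfolding perms_def by (auto intro: permutes_inj)
    obtain q where q: "q \<in> P" "\<forall>y. y \<in> P \<longrightarrow> \<tau> q \<le> \<tau> y"
      using ex_has_least_nat[where P="\<lambda>x. x \<in> P" and k=p and m=\<tau>] pP by auto
    have "\<forall>q'\<in>P-{q}. \<tau> q < \<tau> q'"
    proof
      fix q' assume "q' \<in> P - {q}"
      then have "\<tau> q \<le> \<tau> q'" "\<tau> q \<noteq> \<tau> q'" using q \<open>inj \<tau>\<close> by (auto dest: injD)
      then show "\<tau> q < \<tau> q'" by simp
    qed
    then show "\<tau> \<in> (\<Union>q\<in>P. F q)" using q t unfolding F_def by auto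
  next
    fix \<tau> assume "\<tau> \<in> (\<Union>q\<in>P. F q)" then show "\<tau> \<in> E" unfolding F_def by auto
  qed
  have same: "card (F q) = card (F p)" if qP: "q \<in> P" for q
  proof -
    let ?f = "\<lambda>\<tau>. \<tau> \<circ> Transposition.transpose p q"
    have inv: "?f (?f \<tau>) = \<tau>" for \<tau> by (simp add: comp_assoc)
    have map1: "?f \<tau> \<in> F q" if "\<tau> \<in> F p" for \<tau>
    proof -
      have "?f \<tau> \<in> E" using cl[of \<tau> p q] that pP qP unfolding F_def by blast
      moreover have "\<forall>q'\<in>P-{q}. ?f \<tau> q < ?f \<tau> q'"
      proof
        fix q' assume q': "q' \<in> P - {q}"
        show "?f \<tau> q < ?f \<tau> q'"
        proof (cases "q' = p")
          case True
          have "q \<noteq> p" using q' True by auto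
          then have "\<tau> p < \<tau> q" using that qP unfolding F_def by blast
          then show ?thesis using True by simp
        next
          case False
          have "q' \<noteq> q" using q' by auto
          have "\<tau> p < \<tau> q'" using that q' False unfolding F_def by blast
          then show ?thesis using False \<open>q' \<noteq> q\<close> by simp
        qed
      qed
      ultimately show ?thesis unfolding F_def by auto
    qed
    have map2: "?f \<tau> \<in> F p" if "\<tau> \<in> F q" for \<tau>
    proof -
      have "?f \<tau> \<in> E" using cl[of \<tau> p q] that pP qP unfolding F_def by blast
      moreover have "\<forall>q'\<in>P-{p}. ?f \<tau> p < ?f \<tau> q'"
      proof
        fix q' assume q': "q' \<in> P - {p}"
        show "?f \<tau> p < ?f \<tau> q'"
        proof (cases "q' = q")
          case True
          have "q \<noteq> p" using q' True by auto
          then have "\<tau> q < \<tau> p" using that pP unfolding F_def by blast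
          then show ?thesis using True by simp
        next
          case False
          have "q' \<noteq> p" using q' by auto
          have "\<tau> q < \<tau> q'" using that q' False unfolding F_def by blast
          then show ?thesis using False \<open>q' \<noteq> p\<close> by simp
        qed
      qed
      ultimately show ?thesis unfolding F_def by auto
    qed
    have "bij_betw ?f (F p) (F q)"
      by (rule bij_betw_byWitness[where f'="?f"]) (use inv map1 map2 in auto)
    then show ?thesis by (simp add: bij_betw_same_card)
  qed
  have finF: "\<forall>q\<in>P. finite (F q)" using finE unfolding F_def by auto
  have "card E = (\<Sum>q\<in>P. card (F q))"
    using card_UN_disjoint[OF finP finF disj] cover by simp
  also have "\<dots> = card P * card (F p)" using same by simp
  finally show ?thesis unfolding F_def by simp
qed

definition Aev :: "nat \<Rightarrow> (nat \<Rightarrow> nat) \<Rightarrow> bool" where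
  "Aev i \<tau> \<longleftrightarrow> (\<forall>j\<in>{1..<i}. \<tau> i < \<tau> j)"

definition Bev :: "nat \<Rightarrow> nat \<Rightarrow> (nat \<Rightarrow> nat) \<Rightarrow> bool" where
  "Bev n j \<tau> \<longleftrightarrow> (\<forall>k\<in>{j<..n}. \<tau> j < \<tau> k)"

lemma tr_in: "a \<in> S \<Longrightarrow> b \<in> S \<Longrightarrow> k \<in> S \<Longrightarrow> Transposition.transpose a b k \<in> S"
  by (simp add: Transposition.transpose_def)


lemma tr_fix: "k \<noteq> a \<Longrightarrow> k \<noteq> b \<Longrightarrow> Transposition.transpose a b k = k"
  by simp

lemma cA:
  assumes "i \<in> {1..n}"
  shows "card {\<tau>\<in>perms n. Aev i \<tau>} * i = fact n"
proof -
  have e: "{1..i} - {i} = {1..<i}" using assms by auto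
  have "card {\<tau>\<in>perms n. \<forall>q\<in>{1..i}-{i}. \<tau> i < \<tau> q} * card {1..i} = card (perms n)"
    by (rule count_min) (use assms in \<open>auto intro: perms_swap\<close>)
  moreover have "{\<tau>\<in>perms n. \<forall>q\<in>{1..i}-{i}. \<tau> i < \<tau> q} = {\<tau>\<in>perms n. Aev i \<tau>}"
    unfolding e Aev_def by blast
  ultimately show ?thesis using assms by (simp add: card_perms)
qed

lemma cAA:
  assumes "1 \<le> i" "i < j" "j \<le> n"
  shows "card {\<tau>\<in>perms n. Aev i \<tau> \<and> Aev j \<tau>} * i = card {\<tau>\<in>perms n. Aev j \<tau>}"
proof -
  have e: "{1..i} - {i} = {1..<i}" using assms by auto
  have cl: "\<tau> \<circ> Transposition.transpose a b \<in> {\<tau>\<in>perms n. Aev j \<tau>}"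
    if t: "\<tau> \<in> {\<tau>\<in>perms n. Aev j \<tau>}" and ab: "a \<in> {1..i}" "b \<in> {1..i}" for \<tau> a b
  proof -
    have "\<tau> \<circ> Transposition.transpose a b \<in> perms n" using t ab assms by (intro perms_swap) auto
    moreover have "Aev j (\<tau> \<circ> Transposition.transpose a b)"
      unfolding Aev_def
    proof
      fix k assume k: "k \<in> {1..<j}"
      have "Transposition.transpose a b j = j" using ab assms by (intro tr_fix) auto
      moreover have "Transposition.transpose a b k \<in> {1..<j}" using ab assms k by (intro tr_in) auto
      ultimately show "(\<tau> \<circ> Transposition.transpose a b) j < (\<tau> \<circ> Transposition.transpose a b) k"
        using t unfolding Aev_def by auto
    qed
    ultimately show ?thesis by simp
  qed
  have "card {\<tau>\<in>{\<tau>\<in>perms n. Aev j \<tau>}. \<forall>q\<in>{1..i}-{i}. \<tau> i < \<tau> q} * card {1..i} = card {\<tau>\<in>perms n. Aev j \<tau>}"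
    by (rule count_min) (use assms cl in auto)
  moreover have "{\<tau>\<in>{\<tau>\<in>perms n. Aev j \<tau>}. \<forall>q\<in>{1..i}-{i}. \<tau> i < \<tau> q} = {\<tau>\<in>perms n. Aev i \<tau> \<and> Aev j \<tau>}"
    unfolding e Aev_def by auto
  ultimately show ?thesis by simp
qed

lemma cB:
  assumes "j \<in> {1..n}"
  shows "card {\<tau>\<in>perms n. Bev n j \<tau>} * (n + 1 - j) = fact n"
proof -
  have e: "{j..n} - {j} = {j<..n}" using assms by auto
  have "card {\<tau>\<in>perms n. \<forall>q\<in>{j..n}-{j}. \<tau> j < \<tau> q} * card {j..n} = card (perms n)"
    by (rule count_min) (use assms in \<open>auto intro: perms_swap\<close>)
  moreover have "{\<tau>\<in>perms n. \<forall>q\<in>{j..n}-{j}. \<tau> j < \<tau> q} = {\<tau>\<in>perms n. Bev n j \<tau>}"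
    unfolding e Bev_def by blast
  moreover have "card {j..n} = n + 1 - j" by simp
  ultimately show ?thesis using assms by (simp add: card_perms)
qed

lemma cBB:
  assumes "1 \<le> i" "i < j" "j \<le> n"
  shows "card {\<tau>\<in>perms n. Bev n i \<tau> \<and> Bev n j \<tau>} * (n + 1 - j) = card {\<tau>\<in>perms n. Bev n i \<tau>}"
proof -
  have e: "{j..n} - {j} = {j<..n}" using assms by auto
  have cl: "\<tau> \<circ> Transposition.transpose a b \<in> {\<tau>\<in>perms n. Bev n i \<tau>}"
    if t: "\<tau> \<in> {\<tau>\<in>perms n. Bev n i \<tau>}" and ab: "a \<in> {j..n}" "b \<in> {j..n}" for \<tau> a b
  proof -
    have "\<tau> \<circ> Transposition.transpose a b \<in> perms n" using t ab assms by (intro perms_swap) auto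
    moreover have "Bev n i (\<tau> \<circ> Transposition.transpose a b)"
      unfolding Bev_def
    proof
      fix k assume k: "k \<in> {i<..n}"
      have "Transposition.transpose a b i = i" using ab assms by (intro tr_fix) auto
      moreover have "Transposition.transpose a b k \<in> {i<..n}" using ab assms k by (intro tr_in) auto
      ultimately show "(\<tau> \<circ> Transposition.transpose a b) i < (\<tau> \<circ> Transposition.transpose a b) k"
        using t unfolding Bev_def by auto
    qed
    ultimately show ?thesis by simp
  qed
  have "card {\<tau>\<in>{\<tau>\<in>perms n. Bev n i \<tau>}. \<forall>q\<in>{j..n}-{j}. \<tau> j < \<tau> q} * card {j..n} = card {\<tau>\<in>perms n. Bev n i \<tau>}"
    by (rule count_min) (use assms cl in auto)
  moreover have "{\<tau>\<in>{\<tau>\<in>perms n. Bev n i \<tau>}. \<forall>q\<in>{j..n}-{j}. \<tau> j < \<tau> q} = {\<tau>\<in>perms n. Bev n i \<tau> \<and> Bev n j \<tau>}"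
    unfolding e Bev_def by auto
  ultimately show ?thesis by simp
qed

lemma cAB:
  assumes "1 \<le> i" "i < j" "j \<le> n"
  shows "card {\<tau>\<in>perms n. Aev i \<tau> \<and> Bev n j \<tau>} * i = card {\<tau>\<in>perms n. Bev n j \<tau>}"
proof -
  have e: "{1..i} - {i} = {1..<i}" using assms by auto
  have cl: "\<tau> \<circ> Transposition.transpose a b \<in> {\<tau>\<in>perms n. Bev n j \<tau>}"
    if t: "\<tau> \<in> {\<tau>\<in>perms n. Bev n j \<tau>}" and ab: "a \<in> {1..i}" "b \<in> {1..i}" for \<tau> a b
  proof -
    have "\<tau> \<circ> Transposition.transpose a b \<in> perms n" using t ab assms by (intro perms_swap) auto
    moreover have "Bev n j (\<tau> \<circ> Transposition.transpose a b)"
      unfolding Bev_def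
    proof
      fix k assume k: "k \<in> {j<..n}"
      have "Transposition.transpose a b j = j" using ab assms by (intro tr_fix) auto
      moreover have "Transposition.transpose a b k = k" using ab assms k by (intro tr_fix) auto
      ultimately show "(\<tau> \<circ> Transposition.transpose a b) j < (\<tau> \<circ> Transposition.transpose a b) k"
        using t k unfolding Bev_def by auto
    qed
    ultimately show ?thesis by simp
  qed
  have "card {\<tau>\<in>{\<tau>\<in>perms n. Bev n j \<tau>}. \<forall>q\<in>{1..i}-{i}. \<tau> i < \<tau> q} * card {1..i} = card {\<tau>\<in>perms n. Bev n j \<tau>}"
    by (rule count_min) (use assms cl in auto)
  moreover have "{\<tau>\<in>{\<tau>\<in>perms n. Bev n j \<tau>}. \<forall>q\<in>{1..i}-{i}. \<tau> i < \<tau> q} = {\<tau>\<in>perms n. Aev i \<tau> \<and> Bev n j \<tau>}"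
    unfolding e Aev_def by auto
  ultimately show ?thesis by simp
qed

lemma cAB0:
  assumes "i \<in> {1..n}"
  shows "card {\<tau>\<in>perms n. Aev i \<tau> \<and> Bev n i \<tau>} * n = fact n"
proof -
  have e: "(\<forall>q\<in>{1..n}-{i}. \<tau> i < \<tau> q) \<longleftrightarrow> Aev i \<tau> \<and> Bev n i \<tau>" for \<tau>
  proof -
    have "{1..n}-{i} = {1..<i} \<union> {i<..n}" using assms by auto
    then show ?thesis unfolding Aev_def Bev_def by (simp only: ball_Un)
  qed
  have "card {\<tau>\<in>perms n. \<forall>q\<in>{1..n}-{i}. \<tau> i < \<tau> q} * card {1..n} = card (perms n)"
    by (rule count_min) (use assms in \<open>auto intro: perms_swap\<close>)
  moreover have "{\<tau>\<in>perms n. \<forall>q\<in>{1..n}-{i}. \<tau> i < \<tau> q} = {\<tau>\<in>perms n. Aev i \<tau> \<and> Bev n i \<tau>}"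
    using e by blast
  ultimately show ?thesis by (simp add: card_perms)
qed

lemma cAB1:
  assumes "1 \<le> j" "j < i" "i \<le> n"
  shows "{\<tau>\<in>perms n. Aev i \<tau> \<and> Bev n j \<tau>} = {}"
proof -
  have "\<not> (Aev i \<tau> \<and> Bev n j \<tau>)" for \<tau>
  proof
    assume a: "Aev i \<tau> \<and> Bev n j \<tau>"
    then have "\<tau> i < \<tau> j" unfolding Aev_def using assms by auto
    moreover have "\<tau> j < \<tau> i" using a unfolding Bev_def using assms by auto
    ultimately show False by simp
  qed
  then show ?thesis by auto
qed

lemma card_pos_perms: "real (card (perms n)) = fact n" by (simp add: card_perms)

lemma E_add: "E_perm n (\<lambda>\<tau>. f \<tau> + g \<tau>) = E_perm n f + E_perm n g"
  unfolding E_perm_def by (simp add: sum.distrib add_divide_distrib)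

lemma E_diff: "E_perm n (\<lambda>\<tau>. f \<tau> - g \<tau>) = E_perm n f - E_perm n g"
  unfolding E_perm_def by (simp add: sum_subtractf diff_divide_distrib)

lemma E_cmult: "E_perm n (\<lambda>\<tau>. c * f \<tau>) = c * E_perm n f"
  unfolding E_perm_def by (simp add: sum_distrib_left)

lemma E_const: "E_perm n (\<lambda>\<tau>. c) = c"
  unfolding E_perm_def using card_pos_perms[of n] by simp

lemma Var_alt: "Var_perm n f = E_perm n (\<lambda>\<tau>. (f \<tau>)^2) - (E_perm n f)^2"
proof -
  define c where "c = E_perm n f"
  have "(\<lambda>\<tau>. (f \<tau> - c)^2) = (\<lambda>\<tau>. ((f \<tau>)^2 + (-2*c) * f \<tau>) + c^2)"
    by (rule ext) (simp add: power2_eq_square algebra_simps)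
  then have "Var_perm n f = E_perm n (\<lambda>\<tau>. (f \<tau>)^2) + (-2*c) * c + c^2"
    unfolding Var_perm_def c_def[symmetric] by (simp add: E_add E_diff E_cmult E_const c_def)
  then show ?thesis unfolding c_def by (simp add: power2_eq_square)
qed

lemma Cov_alt: "Cov_perm n f g = E_perm n (\<lambda>\<tau>. f \<tau> * g \<tau>) - E_perm n f * E_perm n g"
proof -
  define c where "c = E_perm n f"
  define d where "d = E_perm n g"
  have "(\<lambda>\<tau>. (f \<tau> - c) * (g \<tau> - d)) = (\<lambda>\<tau>. ((f \<tau> * g \<tau> + (-d) * f \<tau>) + (-c) * g \<tau>) + c * d)"
    by (rule ext) (simp add: algebra_simps)
  then have "Cov_perm n f g = E_perm n (\<lambda>\<tau>. f \<tau> * g \<tau>) + (-d) * c + (-c) * d + c * d"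
    unfolding Cov_perm_def c_def[symmetric] d_def[symmetric] by (simp add: E_add E_diff E_cmult E_const c_def d_def)
  then show ?thesis unfolding c_def d_def by (simp add: algebra_simps)
qed

lemma Var_sum: "Var_perm n (\<lambda>\<tau>. f \<tau> + g \<tau> - c) = Var_perm n f + Var_perm n g + 2 * Cov_perm n f g"
proof -
  have "(\<lambda>\<tau>. (f \<tau> + g \<tau> - c)^2) = (\<lambda>\<tau>. (f \<tau>)^2 + (g \<tau>)^2 + 2 * (f \<tau> * g \<tau>) + (-2*c) * f \<tau> + (-2*c) * g \<tau> + c^2)"
    by (rule ext) (simp add: power2_eq_square algebra_simps)
  then have e1: "E_perm n (\<lambda>\<tau>. (f \<tau> + g \<tau> - c)^2) = E_perm n (\<lambda>\<tau>. (f \<tau>)^2) + E_perm n (\<lambda>\<tau>. (g \<tau>)^2)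
     + 2 * E_perm n (\<lambda>\<tau>. f \<tau> * g \<tau>) + (-2*c) * E_perm n f + (-2*c) * E_perm n g + c^2"
    by (simp add: E_add E_diff E_cmult E_const)
  have e2: "E_perm n (\<lambda>\<tau>. f \<tau> + g \<tau> - c) = E_perm n f + E_perm n g - c"
    by (simp add: E_add E_diff E_const)
  show ?thesis unfolding Var_alt[of n "\<lambda>\<tau>. f \<tau> + g \<tau> - c"] e1 e2 Var_alt[of n f] Var_alt[of n g] Cov_alt
    by (simp add: power2_eq_square algebra_simps)
qed

lemma ind_card: "finite A \<Longrightarrow> real (card {x\<in>A. P x}) = (\<Sum>x\<in>A. if P x then 1 else 0)"
  using sum.inter_filter[of A "\<lambda>_. 1::real" P] by simp

lemma E_count:
  assumes "finite I"
  shows "E_perm n (\<lambda>\<tau>. real (card {i\<in>I. P i \<tau>})) = (\<Sum>i\<in>I. real (card {\<tau>\<in>perms n. P i \<tau>})) / fact n"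
proof -
  have "(\<Sum>\<tau>\<in>perms n. real (card {i\<in>I. P i \<tau>})) = (\<Sum>\<tau>\<in>perms n. \<Sum>i\<in>I. if P i \<tau> then 1 else 0)"
    using ind_card[OF assms] by simp
  also have "\<dots> = (\<Sum>i\<in>I. \<Sum>\<tau>\<in>perms n. if P i \<tau> then 1 else 0)" by (rule sum.swap)
  also have "\<dots> = (\<Sum>i\<in>I. real (card {\<tau>\<in>perms n. P i \<tau>}))"
    using ind_card[OF perms_finite] by simp
  finally show ?thesis unfolding E_perm_def card_pos_perms by simp
qed

lemma E_pair:
  assumes "finite I" "finite J"
  shows "E_perm n (\<lambda>\<tau>. real (card {i\<in>I. P i \<tau>}) * real (card {j\<in>J. Q j \<tau>}))
     = (\<Sum>i\<in>I. \<Sum>j\<in>J. real (card {\<tau>\<in>perms n. P i \<tau> \<and> Q j \<tau>})) / fact n"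
proof -
  have "(\<Sum>\<tau>\<in>perms n. real (card {i\<in>I. P i \<tau>}) * real (card {j\<in>J. Q j \<tau>}))
      = (\<Sum>\<tau>\<in>perms n. \<Sum>i\<in>I. \<Sum>j\<in>J. if P i \<tau> \<and> Q j \<tau> then 1 else 0)"
  proof (rule sum.cong[OF refl])
    fix \<tau>
    show "real (card {i\<in>I. P i \<tau>}) * real (card {j\<in>J. Q j \<tau>})
      = (\<Sum>i\<in>I. \<Sum>j\<in>J. if P i \<tau> \<and> Q j \<tau> then 1 else 0)"
      unfolding ind_card[OF assms(1)] ind_card[OF assms(2)] sum_product
      by (intro sum.cong refl) auto
  qed
  also have "\<dots> = (\<Sum>i\<in>I. \<Sum>\<tau>\<in>perms n. \<Sum>j\<in>J. if P i \<tau> \<and> Q j \<tau> then 1 else 0)" by (rule sum.swap)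
  also have "\<dots> = (\<Sum>i\<in>I. \<Sum>j\<in>J. \<Sum>\<tau>\<in>perms n. if P i \<tau> \<and> Q j \<tau> then 1 else 0)"
    by (rule sum.cong[OF refl], rule sum.swap)
  also have "\<dots> = (\<Sum>i\<in>I. \<Sum>j\<in>J. real (card {\<tau>\<in>perms n. P i \<tau> \<and> Q j \<tau>}))"
    using ind_card[OF perms_finite] by simp
  finally show ?thesis unfolding E_perm_def card_pos_perms by simp
qed

lemma fact_pos_real: "(fact n :: real) > 0" by simp

lemma indicator_moments:
  assumes fin: "finite I"
    and s: "\<And>i. i \<in> I \<Longrightarrow> real (card {\<tau>\<in>perms n. P i \<tau>}) / fact n = a i"
    and p: "\<And>i j. i \<in> I \<Longrightarrow> j \<in> I \<Longrightarrow> i \<noteq> j \<Longrightarrow>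
              real (card {\<tau>\<in>perms n. P i \<tau> \<and> P j \<tau>}) / fact n = a i * a j"
  shows "E_perm n (\<lambda>\<tau>. real (card {i\<in>I. P i \<tau>})) = (\<Sum>i\<in>I. a i)"
    and "Var_perm n (\<lambda>\<tau>. real (card {i\<in>I. P i \<tau>})) = (\<Sum>i\<in>I. a i) - (\<Sum>i\<in>I. (a i)^2)"
proof -
  show E: "E_perm n (\<lambda>\<tau>. real (card {i\<in>I. P i \<tau>})) = (\<Sum>i\<in>I. a i)"
    unfolding E_count[OF fin] sum_divide_distrib using s by simp
  have c: "real (card {\<tau>\<in>perms n. P i \<tau> \<and> P j \<tau>}) / fact n
      = a i * a j + (if i = j then a i - (a i)^2 else 0)" if "i \<in> I" "j \<in> I" for i j
    using s p that by (cases "i = j") (auto simp: power2_eq_square)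
  have "E_perm n (\<lambda>\<tau>. (real (card {i\<in>I. P i \<tau>}))^2)
      = (\<Sum>i\<in>I. \<Sum>j\<in>I. real (card {\<tau>\<in>perms n. P i \<tau> \<and> P j \<tau>})) / fact n"
    unfolding power2_eq_square E_pair[OF fin fin] ..
  also have "\<dots> = (\<Sum>i\<in>I. \<Sum>j\<in>I. a i * a j + (if i = j then a i - (a i)^2 else 0))"
    unfolding sum_divide_distrib using c by simp
  also have "\<dots> = (\<Sum>i\<in>I. a i)^2 + (\<Sum>i\<in>I. a i - (a i)^2)"
  proof -
    have "(\<Sum>i\<in>I. \<Sum>j\<in>I. if i = j then a i - (a i)^2 else 0) = (\<Sum>i\<in>I. a i - (a i)^2)"
    proof (rule sum.cong[OF refl])
      fix i assume "i \<in> I"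
      then show "(\<Sum>j\<in>I. if i = j then a i - (a i)^2 else 0) = a i - (a i)^2"
        using fin by (simp add: sum.delta)
    qed
    moreover have "(\<Sum>i\<in>I. \<Sum>j\<in>I. a i * a j) = (\<Sum>i\<in>I. a i)^2"
      by (simp only: power2_eq_square sum_product)
    ultimately show ?thesis by (simp only: sum.distrib)
  qed
  finally show "Var_perm n (\<lambda>\<tau>. real (card {i\<in>I. P i \<tau>})) = (\<Sum>i\<in>I. a i) - (\<Sum>i\<in>I. (a i)^2)"
    unfolding Var_alt E by (simp add: sum_subtractf)
qed

lemma L_eq: "ltr_minima n \<tau> = card {i\<in>{1..n}. Aev i \<tau>}"
  unfolding ltr_minima_def Aev_def ..

lemma R_eq: "rtl_minima n \<tau> = card {i\<in>{1..n}. Bev n i \<tau>}"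
  unfolding rtl_minima_def Bev_def ..

lemma conj_set_comm: "{\<tau>\<in>S. P \<tau> \<and> Q \<tau>} = {\<tau>\<in>S. Q \<tau> \<and> P \<tau>}" by auto

lemma L_moments:
  shows "E_perm n (\<lambda>\<tau>. real (ltr_minima n \<tau>)) = harm n"
    and "Var_perm n (\<lambda>\<tau>. real (ltr_minima n \<tau>)) = harm n - (\<Sum>i=1..n. 1 / (real i)^2)"
proof -
  have s: "real (card {\<tau>\<in>perms n. Aev i \<tau>}) / fact n = 1 / real i" if "i \<in> {1..n}" for i
  proof -
    have "real (card {\<tau>\<in>perms n. Aev i \<tau>} * i) = real (fact n)"
      using cA[OF that] by (rule arg_cong)
    then have "real (card {\<tau>\<in>perms n. Aev i \<tau>}) * real i = fact n"
      by (simp only: of_nat_mult of_nat_fact)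
    then show ?thesis using that by (simp add: field_simps)
  qed
  have p0: "real (card {\<tau>\<in>perms n. Aev i \<tau> \<and> Aev j \<tau>}) / fact n = 1 / real i * (1 / real j)"
    if "i \<in> {1..n}" "j \<in> {1..n}" "i < j" for i j
  proof -
    have "card {\<tau>\<in>perms n. Aev i \<tau> \<and> Aev j \<tau>} * i = card {\<tau>\<in>perms n. Aev j \<tau>}"
      using that by (intro cAA) auto
    then have "real (card {\<tau>\<in>perms n. Aev i \<tau> \<and> Aev j \<tau>} * i) = real (card {\<tau>\<in>perms n. Aev j \<tau>})"
      by (rule arg_cong)
    then have "real (card {\<tau>\<in>perms n. Aev i \<tau> \<and> Aev j \<tau>}) * real i = real (card {\<tau>\<in>perms n. Aev j \<tau>})"
      by (simp only: of_nat_mult)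
    moreover have "real (card {\<tau>\<in>perms n. Aev j \<tau>}) * real j = fact n"
    proof -
      have "card {\<tau>\<in>perms n. Aev j \<tau>} * j = fact n"
        using cA[of j n] that by auto
      then have "real (card {\<tau>\<in>perms n. Aev j \<tau>} * j) = real (fact n)"
        by (rule arg_cong)
      then show ?thesis by (simp only: of_nat_mult of_nat_fact)
    qed
    ultimately have "real (card {\<tau>\<in>perms n. Aev i \<tau> \<and> Aev j \<tau>}) * (real i * real j) = fact n"
      by (metis mult.assoc)
    moreover have "real i > 0" "real j > 0" using that by auto
    moreover have "(fact n :: real) > 0" by simp
    ultimately show ?thesis by (simp add: field_simps)
  qed
  have p: "real (card {\<tau>\<in>perms n. Aev i \<tau> \<and> Aev j \<tau>}) / fact n = 1 / real i * (1 / real j)"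
    if "i \<in> {1..n}" "j \<in> {1..n}" "i \<noteq> j" for i j
  proof (cases "i < j")
    case True then show ?thesis using p0 that by blast
  next
    case False
    then have "j < i" using that by simp
    have "{\<tau>\<in>perms n. Aev i \<tau> \<and> Aev j \<tau>} = {\<tau>\<in>perms n. Aev j \<tau> \<and> Aev i \<tau>}" by blast
    then show ?thesis using p0[of j i] that \<open>j < i\<close> by (simp only: mult.commute)
  qed
  note m = indicator_moments[of "{1..n}" n Aev "\<lambda>i. 1 / real i", OF finite_atLeastAtMost s p]
  have "E_perm n (\<lambda>\<tau>. real (ltr_minima n \<tau>)) = (\<Sum>i\<in>{1..n}. 1 / real i)"
    unfolding L_eq by (rule m(1))
  then show "E_perm n (\<lambda>\<tau>. real (ltr_minima n \<tau>)) = harm n"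
    by (simp add: harm_def inverse_eq_divide)
  have "Var_perm n (\<lambda>\<tau>. real (ltr_minima n \<tau>)) = (\<Sum>i\<in>{1..n}. 1 / real i) - (\<Sum>i\<in>{1..n}. (1 / real i)^2)"
    unfolding L_eq by (rule m(2))
  then show "Var_perm n (\<lambda>\<tau>. real (ltr_minima n \<tau>)) = harm n - (\<Sum>i=1..n. 1 / (real i)^2)"
    by (simp add: harm_def inverse_eq_divide power_one_over)
qed

lemma rev_sum: "(\<Sum>j=1..n. (f :: nat \<Rightarrow> real) (n + 1 - j)) = (\<Sum>j=1..n. f j)"
  using sum.atLeastAtMost_rev[of f 1 n] by simp

lemma div_helper: "(c::real) * x = N \<Longrightarrow> x > 0 \<Longrightarrow> N > 0 \<Longrightarrow> c / N = 1 / x"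
  by (auto simp: field_simps)

lemma div_helper2: "(c::real) * (x * y) = N \<Longrightarrow> x > 0 \<Longrightarrow> y > 0 \<Longrightarrow> N > 0 \<Longrightarrow> c / N = 1 / y * (1 / x)"
  by (auto simp: field_simps)

lemma R_moments:
  shows "E_perm n (\<lambda>\<tau>. real (rtl_minima n \<tau>)) = harm n"
    and "Var_perm n (\<lambda>\<tau>. real (rtl_minima n \<tau>)) = harm n - (\<Sum>i=1..n. 1 / (real i)^2)"
proof -
  have s: "real (card {\<tau>\<in>perms n. Bev n i \<tau>}) / fact n = 1 / real (n + 1 - i)" if "i \<in> {1..n}" for i
  proof -
    have "real (card {\<tau>\<in>perms n. Bev n i \<tau>} * (n + 1 - i)) = real (fact n)"
      using cB[OF that] by (rule arg_cong)
    then have "real (card {\<tau>\<in>perms n. Bev n i \<tau>}) * real (n + 1 - i) = fact n"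
      by (simp only: of_nat_mult of_nat_fact)
    moreover have "real (n + 1 - i) > 0" using that by auto
    moreover have "(fact n :: real) > 0" by simp
    ultimately show ?thesis by (rule div_helper)
  qed
  have p0: "real (card {\<tau>\<in>perms n. Bev n i \<tau> \<and> Bev n j \<tau>}) / fact n
      = 1 / real (n + 1 - i) * (1 / real (n + 1 - j))"
    if "i \<in> {1..n}" "j \<in> {1..n}" "i < j" for i j
  proof -
    have "card {\<tau>\<in>perms n. Bev n i \<tau> \<and> Bev n j \<tau>} * (n + 1 - j) = card {\<tau>\<in>perms n. Bev n i \<tau>}"
      using that by (intro cBB) auto
    then have "real (card {\<tau>\<in>perms n. Bev n i \<tau> \<and> Bev n j \<tau>} * (n + 1 - j)) = real (card {\<tau>\<in>perms n. Bev n i \<tau>})"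
      by (rule arg_cong)
    then have eq1: "real (card {\<tau>\<in>perms n. Bev n i \<tau> \<and> Bev n j \<tau>}) * real (n + 1 - j) = real (card {\<tau>\<in>perms n. Bev n i \<tau>})"
      by (simp only: of_nat_mult)
    have eq2: "real (card {\<tau>\<in>perms n. Bev n i \<tau>}) * real (n + 1 - i) = fact n"
    proof -
      have "card {\<tau>\<in>perms n. Bev n i \<tau>} * (n + 1 - i) = fact n"
        using cB[of i n] that by auto
      then have "real (card {\<tau>\<in>perms n. Bev n i \<tau>} * (n + 1 - i)) = real (fact n)"
        by (rule arg_cong)
      then show ?thesis by (simp only: of_nat_mult of_nat_fact)
    qed
    have "real (card {\<tau>\<in>perms n. Bev n i \<tau> \<and> Bev n j \<tau>}) * (real (n + 1 - j) * real (n + 1 - i)) = fact n"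
      by (simp only: mult.assoc[symmetric] eq1 eq2)
    moreover have "real (n + 1 - j) > 0" "real (n + 1 - i) > 0" using that by auto
    moreover have "(fact n :: real) > 0" by simp
    ultimately show ?thesis by (rule div_helper2)
  qed
  have p: "real (card {\<tau>\<in>perms n. Bev n i \<tau> \<and> Bev n j \<tau>}) / fact n
      = 1 / real (n + 1 - i) * (1 / real (n + 1 - j))"
    if "i \<in> {1..n}" "j \<in> {1..n}" "i \<noteq> j" for i j
  proof (cases "i < j")
    case True then show ?thesis using p0 that by blast
  next
    case False
    then have "j < i" using that by simp
    have "{\<tau>\<in>perms n. Bev n i \<tau> \<and> Bev n j \<tau>} = {\<tau>\<in>perms n. Bev n j \<tau> \<and> Bev n i \<tau>}" by blast
    then show ?thesis using p0[of j i] that \<open>j < i\<close> by (simp only: mult.commute)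
  qed
  note m = indicator_moments[of "{1..n}" n "Bev n" "\<lambda>i. 1 / real (n + 1 - i)", OF finite_atLeastAtMost s p]
  have "E_perm n (\<lambda>\<tau>. real (rtl_minima n \<tau>)) = (\<Sum>i=1..n. 1 / real (n + 1 - i))"
    unfolding R_eq by (rule m(1))
  also have "\<dots> = (\<Sum>i=1..n. 1 / real i)" by (rule rev_sum[where f="\<lambda>i. 1 / real i"])
  finally show "E_perm n (\<lambda>\<tau>. real (rtl_minima n \<tau>)) = harm n"
    by (simp add: harm_def inverse_eq_divide)
  have "Var_perm n (\<lambda>\<tau>. real (rtl_minima n \<tau>)) = (\<Sum>i=1..n. 1 / real (n + 1 - i)) - (\<Sum>i=1..n. (1 / real (n + 1 - i))^2)"
    unfolding R_eq by (rule m(2))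
  also have "\<dots> = (\<Sum>i=1..n. 1 / real i) - (\<Sum>i=1..n. (1 / real i)^2)"
    using rev_sum[where f="\<lambda>i. 1 / real i"] rev_sum[where f="\<lambda>i. (1 / real i)^2"] by simp
  finally show "Var_perm n (\<lambda>\<tau>. real (rtl_minima n \<tau>)) = harm n - (\<Sum>i=1..n. 1 / (real i)^2)"
    by (simp add: harm_def inverse_eq_divide power_one_over)
qed

lemma recip_bound:
  fixes x y M :: real
  assumes "x > 0" "y > 0" "M > 0" "M \<le> x + y"
  shows "1 / x * (1 / y) \<le> 1 / x / M + 1 / y / M"
proof -
  have pos: "x * (x * y) + x * (y * y) > 0" using assms by (simp add: add_pos_pos mult_pos_pos)
  have "1 / x * (1 / y) = (1 / x + 1 / y) / (x + y)" using assms pos by (simp add: field_simps)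
  also have "\<dots> \<le> (1 / x + 1 / y) / M"
    using assms by (intro divide_left_mono) auto
  also have "\<dots> = 1 / x / M + 1 / y / M" by (simp add: add_divide_distrib)
  finally show ?thesis .
qed

lemma inner_count1:
  assumes "i \<in> {1..n}"
  shows "(\<Sum>j\<in>{1..n}. if j \<le> i then 1 / real i else 0) = 1"
proof -
  have "(\<Sum>j\<in>{1..n}. if j \<le> i then 1 / real i else 0) = (\<Sum>j\<in>{j\<in>{1..n}. j \<le> i}. 1 / real i)"
    by (rule sum.inter_filter[symmetric]) simp
  also have "{j\<in>{1..n}. j \<le> i} = {1..i}" using assms by auto
  finally show ?thesis using assms by simp
qed

lemma inner_count2:
  assumes "j \<in> {1..n}"
  shows "(\<Sum>i\<in>{1..n}. if j \<le> i then 1 / real (n + 1 - j) else 0) = 1"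
proof -
  have "(\<Sum>i\<in>{1..n}. if j \<le> i then 1 / real (n + 1 - j) else 0) = (\<Sum>i\<in>{i\<in>{1..n}. j \<le> i}. 1 / real (n + 1 - j))"
    by (rule sum.inter_filter[symmetric]) simp
  also have "{i\<in>{1..n}. j \<le> i} = {j..n}" using assms by auto
  finally show ?thesis using assms by simp
qed

lemma D_bounds:
  assumes n1: "1 \<le> n"
  defines "D \<equiv> (\<Sum>i\<in>{1..n}. \<Sum>j\<in>{1..n}. if j \<le> i then 1 / real i * (1 / real (n + 1 - j)) else 0)"
  shows "0 \<le> D" "D \<le> 2"
proof -
  show "0 \<le> D" unfolding D_def by (intro sum_nonneg) auto
  let ?M = "real n + 1"
  have "D \<le> (\<Sum>i\<in>{1..n}. \<Sum>j\<in>{1..n}. (if j \<le> i then 1 / real i else 0) / ?M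
                 + (if j \<le> i then 1 / real (n + 1 - j) else 0) / ?M)"
    unfolding D_def
  proof (intro sum_mono)
    fix i j assume i: "i \<in> {1..n}" and j: "j \<in> {1..n}"
    show "(if j \<le> i then 1 / real i * (1 / real (n + 1 - j)) else 0)
        \<le> (if j \<le> i then 1 / real i else 0) / ?M + (if j \<le> i then 1 / real (n + 1 - j) else 0) / ?M"
    proof (cases "j \<le> i")
      case True
      have "real i + real (n + 1 - j) \<ge> ?M" using True i j by auto
      then show ?thesis using True i j recip_bound[of "real i" "real (n + 1 - j)" ?M] by auto
    qed simp
  qed
  also have "\<dots> = (\<Sum>i\<in>{1..n}. \<Sum>j\<in>{1..n}. if j \<le> i then 1 / real i else 0) / ?M
      + (\<Sum>i\<in>{1..n}. \<Sum>j\<in>{1..n}. if j \<le> i then 1 / real (n + 1 - j) else 0) / ?M"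
    by (simp add: sum.distrib sum_divide_distrib)
  also have "(\<Sum>i\<in>{1..n}. \<Sum>j\<in>{1..n}. if j \<le> i then 1 / real i else 0) = real n"
    using inner_count1[of _ n] by simp
  also have "(\<Sum>i\<in>{1..n}. \<Sum>j\<in>{1..n}. if j \<le> i then 1 / real (n + 1 - j) else 0)
      = (\<Sum>j\<in>{1..n}. \<Sum>i\<in>{1..n}. if j \<le> i then 1 / real (n + 1 - j) else 0)"
    by (rule sum.swap)
  also have "\<dots> = real n"
    using inner_count2[of _ n] by simp
  also have "real n / ?M + real n / ?M \<le> 2"
  proof -
    have "real n / ?M \<le> 1" by (simp add: divide_le_eq)
    then show ?thesis by linarith
  qed
  finally show "D \<le> 2" .
qed

lemma Cov_LR:
  assumes n1: "1 \<le> n"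
  shows "Cov_perm n (\<lambda>\<tau>. real (ltr_minima n \<tau>)) (\<lambda>\<tau>. real (rtl_minima n \<tau>))
    = 1 - (\<Sum>i\<in>{1..n}. \<Sum>j\<in>{1..n}. if j \<le> i then 1 / real i * (1 / real (n + 1 - j)) else 0)"
proof -
  define a where "a i = 1 / real i" for i
  define b where "b j = 1 / real (n + 1 - j)" for j
  have c: "real (card {\<tau>\<in>perms n. Aev i \<tau> \<and> Bev n j \<tau>}) / fact n
      = (if i = j then 1 / real n else 0) + (if i < j then a i * b j else 0)"
    if i: "i \<in> {1..n}" and j: "j \<in> {1..n}" for i j
  proof (cases "i < j")
    case True
    have "card {\<tau>\<in>perms n. Aev i \<tau> \<and> Bev n j \<tau>} * i = card {\<tau>\<in>perms n. Bev n j \<tau>}"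
      using True i j by (intro cAB) auto
    then have "real (card {\<tau>\<in>perms n. Aev i \<tau> \<and> Bev n j \<tau>} * i) = real (card {\<tau>\<in>perms n. Bev n j \<tau>})"
      by (rule arg_cong)
    then have eq1: "real (card {\<tau>\<in>perms n. Aev i \<tau> \<and> Bev n j \<tau>}) * real i = real (card {\<tau>\<in>perms n. Bev n j \<tau>})"
      by (simp only: of_nat_mult)
    have "card {\<tau>\<in>perms n. Bev n j \<tau>} * (n + 1 - j) = fact n"
      using cB[of j n] j by auto
    then have "real (card {\<tau>\<in>perms n. Bev n j \<tau>} * (n + 1 - j)) = real (fact n)"
      by (rule arg_cong)
    then have eq2: "real (card {\<tau>\<in>perms n. Bev n j \<tau>}) * real (n + 1 - j) = fact n"
      by (simp only: of_nat_mult of_nat_fact)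
    have "real (card {\<tau>\<in>perms n. Aev i \<tau> \<and> Bev n j \<tau>}) * (real i * real (n + 1 - j)) = fact n"
      by (simp only: mult.assoc[symmetric] eq1 eq2)
    moreover have "real i > 0" "real (n + 1 - j) > 0" using i j by auto
    moreover have "(fact n :: real) > 0" by simp
    ultimately have "real (card {\<tau>\<in>perms n. Aev i \<tau> \<and> Bev n j \<tau>}) / fact n = 1 / real (n + 1 - j) * (1 / real i)"
      by (rule div_helper2)
    then show ?thesis using True unfolding a_def b_def by simp
  next
    case False
    show ?thesis
    proof (cases "i = j")
      case True
      have "card {\<tau>\<in>perms n. Aev i \<tau> \<and> Bev n i \<tau>} * n = fact n"
        using cAB0[of i n] i by auto
      then have "real (card {\<tau>\<in>perms n. Aev i \<tau> \<and> Bev n i \<tau>} * n) = real (fact n)"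
        by (rule arg_cong)
      then have "real (card {\<tau>\<in>perms n. Aev i \<tau> \<and> Bev n i \<tau>}) * real n = fact n"
        by (simp only: of_nat_mult of_nat_fact)
      moreover have "real n > 0" using n1 by auto
      moreover have "(fact n :: real) > 0" by simp
      ultimately have "real (card {\<tau>\<in>perms n. Aev i \<tau> \<and> Bev n i \<tau>}) / fact n = 1 / real n"
        by (rule div_helper)
      then show ?thesis using True by simp
    next
      case False2: False
      then have "j < i" using False by simp
      then have "{\<tau>\<in>perms n. Aev i \<tau> \<and> Bev n j \<tau>} = {}" using i j by (intro cAB1) auto
      then have "card {\<tau>\<in>perms n. Aev i \<tau> \<and> Bev n j \<tau>} = 0" by (simp only: card.empty)
      then show ?thesis using False False2 by simp
    qed
  qed
  have ELR: "E_perm n (\<lambda>\<tau>. real (ltr_minima n \<tau>) * real (rtl_minima n \<tau>))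
      = (\<Sum>i\<in>{1..n}. \<Sum>j\<in>{1..n}. real (card {\<tau>\<in>perms n. Aev i \<tau> \<and> Bev n j \<tau>})) / fact n"
    unfolding L_eq R_eq by (rule E_pair) auto
  also have "\<dots> = (\<Sum>i\<in>{1..n}. \<Sum>j\<in>{1..n}. (if i = j then 1 / real n else 0) + (if i < j then a i * b j else 0))"
    unfolding sum_divide_distrib using c by simp
  also have "\<dots> = (\<Sum>i\<in>{1..n}. \<Sum>j\<in>{1..n}. if i = j then 1 / real n else 0)
      + (\<Sum>i\<in>{1..n}. \<Sum>j\<in>{1..n}. if i < j then a i * b j else 0)"
    by (simp only: sum.distrib)
  also have "(\<Sum>i\<in>{1..n}. \<Sum>j\<in>{1..n}. if i = j then 1 / real n else 0) = 1"
  proof -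
    have "(\<Sum>i\<in>{1..n}. \<Sum>j\<in>{1..n}. if i = j then 1 / real n else 0) = (\<Sum>i\<in>{1..n}. 1 / real n)"
      by (rule sum.cong[OF refl]) (simp add: sum.delta)
    also have "\<dots> = 1" using n1 by simp
    finally show ?thesis .
  qed
  finally have ELR': "E_perm n (\<lambda>\<tau>. real (ltr_minima n \<tau>) * real (rtl_minima n \<tau>))
      = 1 + (\<Sum>i\<in>{1..n}. \<Sum>j\<in>{1..n}. if i < j then a i * b j else 0)" .
  have EL: "E_perm n (\<lambda>\<tau>. real (ltr_minima n \<tau>)) = (\<Sum>i\<in>{1..n}. a i)"
    unfolding L_moments(1) harm_def a_def by (simp add: inverse_eq_divide)
  have ER: "E_perm n (\<lambda>\<tau>. real (rtl_minima n \<tau>)) = (\<Sum>j\<in>{1..n}. b j)"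
    unfolding R_moments(1) harm_def b_def using rev_sum[where f="\<lambda>i. 1 / real i" and n=n]
    by (simp add: inverse_eq_divide)
  have "E_perm n (\<lambda>\<tau>. real (ltr_minima n \<tau>)) * E_perm n (\<lambda>\<tau>. real (rtl_minima n \<tau>))
      = (\<Sum>i\<in>{1..n}. \<Sum>j\<in>{1..n}. a i * b j)"
    unfolding EL ER sum_product ..
  also have "\<dots> = (\<Sum>i\<in>{1..n}. \<Sum>j\<in>{1..n}. (if i < j then a i * b j else 0) + (if j \<le> i then a i * b j else 0))"
    by (intro sum.cong refl) auto
  also have "\<dots> = (\<Sum>i\<in>{1..n}. \<Sum>j\<in>{1..n}. if i < j then a i * b j else 0)
      + (\<Sum>i\<in>{1..n}. \<Sum>j\<in>{1..n}. if j \<le> i then a i * b j else 0)"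
    by (simp only: sum.distrib)
  finally have EE: "E_perm n (\<lambda>\<tau>. real (ltr_minima n \<tau>)) * E_perm n (\<lambda>\<tau>. real (rtl_minima n \<tau>))
      = (\<Sum>i\<in>{1..n}. \<Sum>j\<in>{1..n}. if i < j then a i * b j else 0)
      + (\<Sum>i\<in>{1..n}. \<Sum>j\<in>{1..n}. if j \<le> i then a i * b j else 0)" .
  show ?thesis unfolding Cov_alt ELR' EE unfolding a_def b_def by simp
qed

lemma E_cong: "(\<And>\<tau>. \<tau> \<in> perms n \<Longrightarrow> f \<tau> = g \<tau>) \<Longrightarrow> E_perm n f = E_perm n g"
  unfolding E_perm_def by (simp cong: sum.cong)

lemma Var_cong: "(\<And>\<tau>. \<tau> \<in> perms n \<Longrightarrow> f \<tau> = g \<tau>) \<Longrightarrow> Var_perm n f = Var_perm n g"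
proof -
  assume h: "\<And>\<tau>. \<tau> \<in> perms n \<Longrightarrow> f \<tau> = g \<tau>"
  have e: "E_perm n f = E_perm n g" by (rule E_cong) (rule h)
  show ?thesis unfolding Var_perm_def e by (rule E_cong) (simp add: h)
qed

lemma S_eq:
  assumes "\<tau> \<in> perms n" "1 \<le> n"
  shows "real (greedy_steps n \<tau>) = real (ltr_minima n \<tau>) + real (rtl_minima n \<tau>) - 2"
proof -
  have perm: "\<tau> permutes {1..n}" using assms unfolding perms_def by simp
  have w: "greedy_steps n \<tau> = card (LT n \<tau>) + card (RT n \<tau>) - 2" by (rule walk[OF perm assms(2)])
  have l: "card (LT n \<tau>) = ltr_minima n \<tau>" unfolding LT_def ltr_minima_def ..
  have r: "card (RT n \<tau>) = rtl_minima n \<tau>" unfolding RT_def rtl_minima_def ..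
  have "1 \<in> LT n \<tau>" unfolding LT_def using assms by auto
  moreover have "finite (LT n \<tau>)" unfolding LT_def by auto
  ultimately have "card (LT n \<tau>) > 0" by (auto simp: card_gt_0_iff)
  then have l1: "card (LT n \<tau>) \<ge> 1" by simp
  have "n \<in> RT n \<tau>" unfolding RT_def using assms by auto
  moreover have "finite (RT n \<tau>)" unfolding RT_def by auto
  ultimately have "card (RT n \<tau>) > 0" by (auto simp: card_gt_0_iff)
  then have r1: "card (RT n \<tau>) \<ge> 1" by simp
  show ?thesis using w l r l1 r1 by simp
qed

lemma H2_le: "1 \<le> n \<Longrightarrow> (\<Sum>i=1..n. 1 / (real i)^2) \<le> 2 - 1 / real n"
proof (induction n rule: nat_induct_at_least)
  case base
  then show ?case by simp
next
  case (Suc n)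
  have "(\<Sum>i=1..Suc n. 1 / (real i)^2) = (\<Sum>i=1..n. 1 / (real i)^2) + 1 / (real (Suc n))^2"
    by simp
  also have "\<dots> \<le> 2 - 1 / real n + 1 / (real (Suc n))^2" using Suc by simp
  also have "\<dots> \<le> 2 - 1 / real (Suc n)"
  proof -
    have n0: "real n > 0" using Suc by simp
    have "1 / (real (Suc n))^2 \<le> 1 / (real n * real (Suc n))"
      using n0 by (intro divide_left_mono) (auto simp: power2_eq_square)
    also have "\<dots> = 1 / real n - 1 / real (Suc n)" using n0 by (simp add: field_simps)
    finally show ?thesis by simp
  qed
  finally show ?case .
qed

lemma H2_nonneg: "0 \<le> (\<Sum>i=1..n. 1 / (real i)^2)" by (intro sum_nonneg) auto

theorem theorem2:
  shows "(\<forall>n\<ge>1. E_perm n (\<lambda>\<tau>. real (greedy_steps n \<tau>)) = 2 * harm n - 2)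
    \<and> ((\<lambda>n. E_perm n (\<lambda>\<tau>. real (greedy_steps n \<tau>))
            - (2 * ln (real n) + 2 * euler_mascheroni - 2)) \<longlonglongrightarrow> 0)
    \<and> (\<forall>n\<ge>1. Var_perm n (\<lambda>\<tau>. real (greedy_steps n \<tau>))
            = 2 * (harm n - (\<Sum>i=1..n. 1 / (real i)\<^sup>2))
              + 2 * Cov_perm n (\<lambda>\<tau>. real (ltr_minima n \<tau>)) (\<lambda>\<tau>. real (rtl_minima n \<tau>)))
    \<and> (\<lambda>n. Var_perm n (\<lambda>\<tau>. real (greedy_steps n \<tau>)) - 2 * ln (real n)) \<in> O(\<lambda>_. 1)"
proof -
  have ES: "E_perm n (\<lambda>\<tau>. real (greedy_steps n \<tau>)) = 2 * harm n - 2" if n1: "1 \<le> n" for n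
  proof -
    have "E_perm n (\<lambda>\<tau>. real (greedy_steps n \<tau>))
        = E_perm n (\<lambda>\<tau>. real (ltr_minima n \<tau>) + real (rtl_minima n \<tau>) - 2)"
      by (rule E_cong) (rule S_eq[OF _ n1])
    also have "\<dots> = harm n + harm n - 2"
      by (simp add: E_add E_diff E_const L_moments R_moments)
    finally show ?thesis by simp
  qed
  have VS: "Var_perm n (\<lambda>\<tau>. real (greedy_steps n \<tau>))
            = 2 * (harm n - (\<Sum>i=1..n. 1 / (real i)\<^sup>2))
              + 2 * Cov_perm n (\<lambda>\<tau>. real (ltr_minima n \<tau>)) (\<lambda>\<tau>. real (rtl_minima n \<tau>))"
    if n1: "1 \<le> n" for n
  proof -
    have "Var_perm n (\<lambda>\<tau>. real (greedy_steps n \<tau>))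
        = Var_perm n (\<lambda>\<tau>. real (ltr_minima n \<tau>) + real (rtl_minima n \<tau>) - 2)"
      by (rule Var_cong) (rule S_eq[OF _ n1])
    also have "\<dots> = Var_perm n (\<lambda>\<tau>. real (ltr_minima n \<tau>)) + Var_perm n (\<lambda>\<tau>. real (rtl_minima n \<tau>))
        + 2 * Cov_perm n (\<lambda>\<tau>. real (ltr_minima n \<tau>)) (\<lambda>\<tau>. real (rtl_minima n \<tau>))"
      by (rule Var_sum)
    finally show ?thesis by (simp add: L_moments R_moments)
  qed
  have lim: "(\<lambda>n. E_perm n (\<lambda>\<tau>. real (greedy_steps n \<tau>))
            - (2 * ln (real n) + 2 * euler_mascheroni - 2)) \<longlonglongrightarrow> 0"
  proof -
    have "(\<lambda>n. 2 * ((harm n - ln (real n)) - euler_mascheroni)) \<longlonglongrightarrow> 2 * (euler_mascheroni - euler_mascheroni)"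
      by (intro tendsto_mult tendsto_const tendsto_diff euler_mascheroni_LIMSEQ)
    then have t: "(\<lambda>n. 2 * ((harm n - ln (real n)) - euler_mascheroni)) \<longlonglongrightarrow> 0" by simp
    have ev: "eventually (\<lambda>n. 2 * ((harm n - ln (real n)) - euler_mascheroni)
        = E_perm n (\<lambda>\<tau>. real (greedy_steps n \<tau>)) - (2 * ln (real n) + 2 * euler_mascheroni - 2)) sequentially"
      using eventually_ge_at_top[of "1::nat"] by eventually_elim (simp add: ES algebra_simps)
    show ?thesis by (rule Lim_transform_eventually[OF t ev])
  qed
  have bnd: "(\<lambda>n. Var_perm n (\<lambda>\<tau>. real (greedy_steps n \<tau>)) - 2 * ln (real n)) \<in> O(\<lambda>_. 1)"
  proof (rule bigoI[where c=8])
    show "eventually (\<lambda>n. norm (Var_perm n (\<lambda>\<tau>. real (greedy_steps n \<tau>)) - 2 * ln (real n)) \<le> 8 * norm (1::real)) sequentially"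
      using eventually_ge_at_top[of "1::nat"]
    proof eventually_elim
      case (elim n)
      define D where "D = (\<Sum>i\<in>{1..n}. \<Sum>j\<in>{1..n}. if j \<le> i then 1 / real i * (1 / real (n + 1 - j)) else 0)"
      have D: "0 \<le> D" "D \<le> 2" unfolding D_def using D_bounds[OF elim] by auto
      have cov: "Cov_perm n (\<lambda>\<tau>. real (ltr_minima n \<tau>)) (\<lambda>\<tau>. real (rtl_minima n \<tau>)) = 1 - D"
        unfolding D_def by (rule Cov_LR[OF elim])
      have h1: "harm n - ln (real n) \<ge> 0" using euler_mascheroni_sequence_nonneg[of n] elim by simp
      have h2: "harm n - ln (real n) \<le> 1"
      proof -
        have "harm 1 = (1::real)" by (simp add: harm_def)
        then show ?thesis using euler_mascheroni_sequence_decreasing[of 1 n] elim by simp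
      qed
      have q1: "(\<Sum>i=1..n. 1 / (real i)^2) \<le> 2"
      proof -
        have "1 / real n \<ge> 0" by simp
        then show ?thesis using H2_le[OF elim] by linarith
      qed
      have q0: "(\<Sum>i=1..n. 1 / (real i)^2) \<ge> 0" by (rule H2_nonneg)
      have "Var_perm n (\<lambda>\<tau>. real (greedy_steps n \<tau>)) - 2 * ln (real n)
          = 2 * (harm n - ln (real n)) - 2 * (\<Sum>i=1..n. 1 / (real i)^2) + 2 * (1 - D)"
        using VS[OF elim] cov by simp
      then show ?case using D h1 h2 q1 q0 by simp
    qed
  qed
  have A: "\<forall>n\<ge>1. E_perm n (\<lambda>\<tau>. real (greedy_steps n \<tau>)) = 2 * harm n - 2"
    using ES by blast
  have B: "\<forall>n\<ge>1. Var_perm n (\<lambda>\<tau>. real (greedy_steps n \<tau>))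
            = 2 * (harm n - (\<Sum>i=1..n. 1 / (real i)\<^sup>2))
              + 2 * Cov_perm n (\<lambda>\<tau>. real (ltr_minima n \<tau>)) (\<lambda>\<tau>. real (rtl_minima n \<tau>))"
    using VS by blast
  show ?thesis by (rule conjI[OF A conjI[OF lim conjI[OF B bnd]]])
qed

end
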